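(* Let $Y$ be a nominal $\mathrm{Sb}$-set and let $y\in Y$ be supported by a set of cardinality at most $1$. Then $\{m\cdot y\mid m\in\mathrm{Sb}\}=\{g\cdot y\mid g\in\mathrm{Perm}\}$.
   Context: $\mathbb{A}$ is a countably infinite set of atoms; $\mathrm{Sb}$ is the monoid of functions $\mathbb{A}\to\mathbb{A}$ that are the identity outside a finite set; $\mathrm{Perm}\subseteq\mathrm{Sb}$ its bijections. An $\mathrm{Sb}$-set has a monoid action of $\mathrm{Sb}$; $C\subseteq\mathbb{A}$ supports $y$ if for all $m_1,m_2\in\mathrm{Sb}$ with $m_1|_C=m_2|_C$ we have $m_1y=m_2y$; a nominal $\mathrm{Sb}$-set is one in which every element has a finite support. *)

theory Defs
  imports "HOL-Library.Countable_Set"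
begin

text \<open>Atoms are the elements of a type 'a assumed countably infinite.
Sb: finitely supported endofunctions; Perm: bijective ones.\<close>

definition Sb :: "('a \<Rightarrow> 'a) set" where
  "Sb = {m. finite {a. m a \<noteq> a}}"

definition Perm :: "('a \<Rightarrow> 'a) set" where
  "Perm = {m \<in> Sb. bij m}"

definition Sb_set :: "(('a \<Rightarrow> 'a) \<Rightarrow> 'b \<Rightarrow> 'b) \<Rightarrow> bool" where
  "Sb_set act \<longleftrightarrow> (\<forall>y. act id y = y) \<and>
     (\<forall>m1\<in>Sb. \<forall>m2\<in>Sb. \<forall>y. act (m1 \<circ> m2) y = act m1 (act m2 y))"

definition supports :: "(('a \<Rightarrow> 'a) \<Rightarrow> 'b \<Rightarrow> 'b) \<Rightarrow> 'a set \<Rightarrow> 'b \<Rightarrow> bool" where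
  "supports act C y \<longleftrightarrow>
     (\<forall>m1\<in>Sb. \<forall>m2\<in>Sb. (\<forall>a\<in>C. m1 a = m2 a) \<longrightarrow> act m1 y = act m2 y)"

definition nominal_Sb_set :: "(('a \<Rightarrow> 'a) \<Rightarrow> 'b \<Rightarrow> 'b) \<Rightarrow> bool" where
  "nominal_Sb_set act \<longleftrightarrow> Sb_set act \<and> (\<forall>y. \<exists>C. finite C \<and> supports act C y)"

end

theory Submission
  imports Defs "HOL-Combinatorics.Transposition"
begin

lemma supp_eq:
  assumes "supports act C y" "m1 \<in> Sb" "m2 \<in> Sb" "\<forall>a\<in>C. m1 a = m2 a"
  shows "act m1 y = act m2 y"
  using assms unfolding supports_def by blast

theorem mainTheorem13:
  fixes act :: "('a \<Rightarrow> 'a) \<Rightarrow> 'b \<Rightarrow> 'b" and y :: 'b and C :: "'a set"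
  assumes "countable (UNIV :: 'a set)" and "infinite (UNIV :: 'a set)"
    and "nominal_Sb_set act"
    and "supports act C y" and "finite C" and "card C \<le> 1"
  shows "{act m y | m. m \<in> Sb} = {act g y | g. g \<in> Perm}"
proof
  show "{act g y | g. g \<in> Perm} \<subseteq> {act m y | m. m \<in> Sb}"
    unfolding Perm_def by blast
next
  show "{act m y | m. m \<in> Sb} \<subseteq> {act g y | g. g \<in> Perm}"
  proof
    fix z assume "z \<in> {act m y | m. m \<in> Sb}"
    then obtain m where m: "m \<in> Sb" "z = act m y" by blast
    have C: "C = {} \<or> (\<exists>a. C = {a})"
    proof (cases "card C = 0")
      case True thus ?thesis using assms(5) by simp
    next
      case False
      hence "card C = 1" using assms(6) by simp
      then obtain x where "C = {x}" by (rule card_1_singletonE)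
      thus ?thesis by blast
    qed
    have idP: "id \<in> Perm" by (simp add: Perm_def Sb_def)
    show "z \<in> {act g y | g. g \<in> Perm}"
    proof (cases "C = {}")
      case True
      have "act m y = act id y"
        by (rule supp_eq[OF assms(4) m(1)]) (use idP True in \<open>auto simp: Perm_def\<close>)
      then show ?thesis using m idP by blast
    next
      case False
      then obtain a where a: "C = {a}" using C by blast
      define g where "g = Transposition.transpose a (m a)"
      have "{x. g x \<noteq> x} \<subseteq> {a, m a}" unfolding g_def by (auto simp: transpose_def)
      hence "finite {x. g x \<noteq> x}" by (rule finite_subset) simp
      moreover have "bij g" unfolding g_def by (rule bij_transpose)
      ultimately have gP: "g \<in> Perm" unfolding Perm_def Sb_def by simp
      have ga: "g a = m a" unfolding g_def by simp
      have "act m y = act g y"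
        by (rule supp_eq[OF assms(4) m(1)]) (use gP a ga in \<open>auto simp: Perm_def\<close>)
      then show ?thesis using m gP by blast
    qed
  qed
qed

end
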